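(* Let $G$ be a connected graph and $K\subseteq V(G)$ a nonempty set of vertices inducing a clique in $G$. Let $G_K$ be obtained from $G$ by adding a new vertex $x$ with $N_{G_K}(x)=K$. For each search tree $T$ on $G$ let $P^x(T)=\{T(i,x,v_{\lambda(T)}) \mid i\in\{0,\ldots,\lambda(T)+1\}\}$. Then $\{P^x(T)\mid T\in V(\mathcal{R}(G))\}$ is a partition of $V(\mathcal{R}(G_K))$.
   Context: For a connected graph $G$, a search tree on $G$ is a rooted tree with vertex set $V(G)$ defined recursively: its root is some vertex $r\in V(G)$, and the children of $r$ are the roots of search trees on the connected components of $G-r$. The rotation graph $\mathcal{R}(G)$ has the search trees on $G$ as vertices (adjacency given by rotations; only its vertex set matters here). For a rooted tree $T$ with root $r_T$ and $w\in V(T)$, $d_{T,w}$ is the distance from $r_T$ to $w$ in $T$. For a search tree $T$ on $G$, all vertices of the clique $K$ lie on a common root-to-leaf path; $\lambda(T)=\max\{d_{T,u}\mid u\in K\}$ and $v_{\lambda(T)}$ is the unique vertex of $K$ with $d_{T,v_{\lambda(T)}}=\lambda(T)$. Insertion: for a rooted tree $T$, a vertex $v\in V(T)$ with $d=d_{T,v}$, root-to-$v$ path $r_T=a_0,a_1,\ldots,a_d=v$, and a new vertex $x\notin V(T)$, the rooted tree $T(i,x,v)$ on $V(T)\cup\{x\}$ is: for $i=0$, $x$ is the new root with $T$ as its only subtree; for $1\le i\le d$, the edge $a_{i-1}a_i$ is subdivided by $x$ (root unchanged); for $i=d+1$, $x$ is added as a new leaf child of $v$. *)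

theory Defs
  imports Main "HOL-Library.Disjoint_Sets"
begin

text \<open>Rooted trees: pairs (r, P) of a root r and a set P of (parent, child) edges;
  the vertex set is {r} together with all vertices in P.\<close>

type_synonym 'a rtree = "'a \<times> ('a \<times> 'a) set"

definition graph :: "'a set \<Rightarrow> ('a \<Rightarrow> 'a \<Rightarrow> bool) \<Rightarrow> bool" where
  "graph V E \<longleftrightarrow> finite V \<and> (\<forall>u v. E u v \<longrightarrow> u \<in> V \<and> v \<in> V \<and> E v u \<and> u \<noteq> v)"

definition reach :: "('a \<Rightarrow> 'a \<Rightarrow> bool) \<Rightarrow> 'a set \<Rightarrow> 'a \<Rightarrow> 'a \<Rightarrow> bool" where
  "reach E S u v \<longleftrightarrow> (u, v) \<in> {(a, b). a \<in> S \<and> b \<in> S \<and> E a b}\<^sup>*"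

definition connected_graph :: "('a \<Rightarrow> 'a \<Rightarrow> bool) \<Rightarrow> 'a set \<Rightarrow> bool" where
  "connected_graph E S \<longleftrightarrow> S \<noteq> {} \<and> (\<forall>u\<in>S. \<forall>v\<in>S. reach E S u v)"

definition components :: "('a \<Rightarrow> 'a \<Rightarrow> bool) \<Rightarrow> 'a set \<Rightarrow> 'a set set" where
  "components E S = {{v \<in> S. reach E S u v} | u. u \<in> S}"

inductive search_tree :: "('a \<Rightarrow> 'a \<Rightarrow> bool) \<Rightarrow> 'a set \<Rightarrow> 'a \<Rightarrow> ('a \<times> 'a) set \<Rightarrow> bool"
  for E where
  "\<lbrakk> r \<in> V; connected_graph E V;
     \<forall>C \<in> components E (V - {r}). search_tree E C (rt C) (Pt C);
     P = (\<Union>C \<in> components E (V - {r}). insert (r, rt C) (Pt C)) \<rbrakk>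
   \<Longrightarrow> search_tree E V r P"

definition search_trees :: "'a set \<Rightarrow> ('a \<Rightarrow> 'a \<Rightarrow> bool) \<Rightarrow> 'a rtree set" where
  "search_trees V E = {(r, P). search_tree E V r P}"

text \<open>Distance from the root to w in the rooted tree with edge set P
  (= number of proper ancestors of w).\<close>
definition depth :: "('a \<times> 'a) set \<Rightarrow> 'a \<Rightarrow> nat" where
  "depth P w = card {a. (a, w) \<in> P\<^sup>+}"

definition anc_at :: "('a \<times> 'a) set \<Rightarrow> 'a \<Rightarrow> nat \<Rightarrow> 'a" where
  "anc_at P v j = (THE a. (a, v) \<in> P\<^sup>* \<and> depth P a = j)"

definition ins :: "'a rtree \<Rightarrow> nat \<Rightarrow> 'a \<Rightarrow> 'a \<Rightarrow> 'a rtree" where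
  "ins T i x v = (case T of (r, P) \<Rightarrow>
     if i = 0 then (x, insert (x, r) P)
     else if i \<le> depth P v then
       (r, (P - {(anc_at P v (i - 1), anc_at P v i)})
            \<union> {(anc_at P v (i - 1), x), (x, anc_at P v i)})
     else (r, insert (v, x) P))"

definition lam :: "'a set \<Rightarrow> 'a rtree \<Rightarrow> nat" where
  "lam K T = Max (depth (snd T) ` K)"

definition v_lam :: "'a set \<Rightarrow> 'a rtree \<Rightarrow> 'a" where
  "v_lam K T = (THE u. u \<in> K \<and> depth (snd T) u = lam K T)"

definition Px :: "'a set \<Rightarrow> 'a \<Rightarrow> 'a rtree \<Rightarrow> 'a rtree set" where
  "Px K x T = {ins T i x (v_lam K T) | i. i \<le> lam K T + 1}"

definition add_vertex_edges :: "('a \<Rightarrow> 'a \<Rightarrow> bool) \<Rightarrow> 'a set \<Rightarrow> 'a \<Rightarrow> 'a \<Rightarrow> 'a \<Rightarrow> bool" where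
  "add_vertex_edges E K x u v \<longleftrightarrow> E u v \<or> (u = x \<and> v \<in> K) \<or> (v = x \<and> u \<in> K)"

end

theory Submission
  imports Defs
begin


definition symE :: "('a \<Rightarrow> 'a \<Rightarrow> bool) \<Rightarrow> bool" where
  "symE E \<longleftrightarrow> (\<forall>a b. E a b \<longrightarrow> E b a)"

lemma reach_refl[simp]: "reach E S u u"
  by (simp add: reach_def)

lemma reach_trans: "reach E S u v \<Longrightarrow> reach E S v w \<Longrightarrow> reach E S u w"
  unfolding reach_def by (rule rtrancl_trans)

lemma reach_sym: assumes "symE E" "reach E S u v" shows "reach E S v u"
  using assms(2) unfolding reach_def
proof (induct rule: rtrancl_induct)
  case base then show ?case by simp
next
  case (step y z)
  then have "(z, y) \<in> {(a, b). a \<in> S \<and> b \<in> S \<and> E a b}" using assms(1) by (auto simp: symE_def)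
  then show ?case using step(3) by (rule converse_rtrancl_into_rtrancl)
qed

lemma reach_edge: "u \<in> S \<Longrightarrow> v \<in> S \<Longrightarrow> E u v \<Longrightarrow> reach E S u v"
  unfolding reach_def by auto

lemma reach_mem: "reach E S u v \<Longrightarrow> u \<in> S \<Longrightarrow> v \<in> S"
  unfolding reach_def by (induct rule: rtrancl_induct) auto

lemma reach_mono: assumes "reach E S u v" "S \<subseteq> S'" "\<And>a b. a \<in> S \<Longrightarrow> b \<in> S \<Longrightarrow> E a b \<Longrightarrow> E' a b"
  shows "reach E' S' u v"
proof -
  have "{(a, b). a \<in> S \<and> b \<in> S \<and> E a b} \<subseteq> {(a, b). a \<in> S' \<and> b \<in> S' \<and> E' a b}"
    using assms(2,3) by auto
  then show ?thesis using assms(1) unfolding reach_def using rtrancl_mono by blast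
qed

lemma reach_cong: assumes "\<And>a b. a \<in> S \<Longrightarrow> b \<in> S \<Longrightarrow> E a b = E' a b"
  shows "reach E S = reach E' S"
proof -
  have "{(a, b). a \<in> S \<and> b \<in> S \<and> E a b} = {(a, b). a \<in> S \<and> b \<in> S \<and> E' a b}"
    using assms by auto
  then show ?thesis unfolding reach_def[abs_def] by simp
qed

lemma reach_first: assumes "reach E S u v" "u \<noteq> v" shows "\<exists>y\<in>S. E u y \<and> u \<in> S"
  using assms unfolding reach_def by (auto elim: converse_rtranclE)

lemma comp_mem: "u \<in> S \<Longrightarrow> {v\<in>S. reach E S u v} \<in> components E S"
  unfolding components_def by auto

lemma comps_sub: "C \<in> components E S \<Longrightarrow> C \<subseteq> S"
  unfolding components_def by auto

lemma comps_ne: "C \<in> components E S \<Longrightarrow> C \<noteq> {}"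
  unfolding components_def by auto

lemma comps_eq: assumes "symE E" "C \<in> components E S" "w \<in> C"
  shows "C = {v\<in>S. reach E S w v}"
proof -
  obtain u where u: "u \<in> S" "C = {v\<in>S. reach E S u v}" using assms(2) unfolding components_def by auto
  then have "reach E S u w" using assms(3) by auto
  then have "reach E S w u" using assms(1) reach_sym by metis
  have "reach E S u v \<longleftrightarrow> reach E S w v" for v
    using reach_trans[OF `reach E S w u`, of v] reach_trans[OF `reach E S u w`, of v] by blast
  then show ?thesis using u(2) by simp
qed

lemma comps_disj: assumes "symE E" "C1 \<in> components E S" "C2 \<in> components E S" "C1 \<noteq> C2"
  shows "C1 \<inter> C2 = {}"
  using comps_eq[OF assms(1,2)] comps_eq[OF assms(1,3)] assms(4) by blast

lemma comps_Union: "\<Union>(components E S) = S"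
proof
  show "\<Union>(components E S) \<subseteq> S" using comps_sub by blast
  show "S \<subseteq> \<Union>(components E S)"
  proof
    fix w assume "w \<in> S"
    then have "w \<in> {v\<in>S. reach E S w v}" "{v\<in>S. reach E S w v} \<in> components E S"
      using comp_mem by auto
    then show "w \<in> \<Union>(components E S)" by blast
  qed
qed

lemma comps_conn: assumes "connected_graph E S" shows "components E S = {S}"
  using assms unfolding connected_graph_def components_def by auto

lemma st_transfer: assumes "search_tree E1 S r P" "\<forall>a\<in>S. \<forall>b\<in>S. E1 a b = E2 a b"
  shows "search_tree E2 S r P"
  using assms
proof (induct arbitrary: rule: search_tree.induct)
  case (1 r V rt Pt P)
  have rc: "reach E1 T = reach E2 T" if "T \<subseteq> V" for T
    by (rule reach_cong) (use 1(5) that in blast)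
  have cc: "components E1 (V - {r}) = components E2 (V - {r})"
    unfolding components_def using rc[of "V - {r}"] by auto
  have "connected_graph E2 V" using 1(2) rc[of V] unfolding connected_graph_def by auto
  moreover have "search_tree E2 C (rt C) (Pt C)" if C: "C \<in> components E2 (V - {r})" for C
  proof -
    have C1: "C \<in> components E1 (V - {r})" using C cc by simp
    have "C \<subseteq> V" using comps_sub[OF C1] by blast
    then have "\<forall>a\<in>C. \<forall>b\<in>C. E1 a b = E2 a b" using 1(5) by blast
    then show ?thesis using 1(3) C1 by blast
  qed
  ultimately show ?case using 1(1) 1(4) cc search_tree.intros[of r V E2 rt Pt P] by simp
qed

lemma st_basic: "search_tree E S r P \<Longrightarrow> r \<in> S \<and> P \<subseteq> S \<times> S \<and> (\<forall>w\<in>S. (r, w) \<in> P\<^sup>*) \<and> (\<forall>a. (a, r) \<notin> P)"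
proof (induct rule: search_tree.induct)
  case (1 r V rt Pt P)
  let ?CS = "components E (V - {r})"
  have sub: "C \<subseteq> V - {r}" if "C \<in> ?CS" for C using comps_sub that by blast
  have IH: "rt C \<in> C \<and> Pt C \<subseteq> C \<times> C \<and> (\<forall>w\<in>C. (rt C, w) \<in> (Pt C)\<^sup>*)" if "C \<in> ?CS" for C
    using 1(3) that by blast
  have "P \<subseteq> V \<times> V"
  proof
    fix e assume "e \<in> P"
    then have "e \<in> (\<Union>C\<in>?CS. insert (r, rt C) (Pt C))" using 1(4) by simp
    then obtain C where C: "C \<in> ?CS" "e \<in> insert (r, rt C) (Pt C)" by (rule UN_E)
    have "rt C \<in> C" "Pt C \<subseteq> C \<times> C" using IH[OF C(1)] by auto
    have CV: "C \<subseteq> V" using sub[OF C(1)] by blast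
    have "Pt C \<subseteq> V \<times> V" using `Pt C \<subseteq> C \<times> C` Sigma_mono[OF CV CV] by (rule order_trans)
    moreover have "(r, rt C) \<in> V \<times> V" using 1(1) CV `rt C \<in> C` by blast
    ultimately show "e \<in> V \<times> V" using C(2) by blast
  qed
  moreover have "(r, w) \<in> P\<^sup>*" if "w \<in> V" for w
  proof (cases "w = r")
    case False
    then have "w \<in> V - {r}" using that by auto
    then have "w \<in> \<Union>?CS" using comps_Union[of E "V - {r}"] by simp
    then obtain C where C: "C \<in> ?CS" "w \<in> C" by (rule UnionE)
    then have "(rt C, w) \<in> (Pt C)\<^sup>*" using IH by blast
    moreover have "Pt C \<subseteq> P" "(r, rt C) \<in> P" using C(1) 1(4) by auto
    moreover have "(Pt C)\<^sup>* \<subseteq> P\<^sup>*" using rtrancl_mono `Pt C \<subseteq> P` by auto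
    ultimately have "(rt C, w) \<in> P\<^sup>*" "(r, rt C) \<in> P" by auto
    then show ?thesis by (rule converse_rtrancl_into_rtrancl[rotated])
  qed simp
  moreover have "(a, r) \<notin> P" for a
  proof
    assume "(a, r) \<in> P"
    then have "(a, r) \<in> (\<Union>C\<in>?CS. insert (r, rt C) (Pt C))" using 1(4) by simp
    then obtain C where C: "C \<in> ?CS" "(a, r) \<in> insert (r, rt C) (Pt C)" by (rule UN_E)
    have "rt C \<in> C" "Pt C \<subseteq> C \<times> C" using IH[OF C(1)] by auto
    have rC: "r \<notin> C" using sub[OF C(1)] by blast
    show False
    proof (cases "(a, r) = (r, rt C)")
      case True then show False using rC `rt C \<in> C` by simp
    next
      case False then have "(a, r) \<in> Pt C" using C(2) by blast
      then have "(a, r) \<in> C \<times> C" using `Pt C \<subseteq> C \<times> C` by blast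
      then show False using rC by simp
    qed
  qed
  ultimately show ?case using 1(1) by blast
qed


definition dec :: "'a set set \<Rightarrow> 'a \<Rightarrow> ('a set \<Rightarrow> 'a) \<Rightarrow> ('a set \<Rightarrow> ('a \<times> 'a) set) \<Rightarrow> bool" where
  "dec CS r rt Pt \<longleftrightarrow> r \<notin> \<Union>CS \<and> (\<forall>C1\<in>CS. \<forall>C2\<in>CS. C1 \<noteq> C2 \<longrightarrow> C1 \<inter> C2 = {})
     \<and> (\<forall>C\<in>CS. rt C \<in> C \<and> Pt C \<subseteq> C \<times> C \<and> (\<forall>w\<in>C. (rt C, w) \<in> (Pt C)\<^sup>*))"

lemma dec_edge:
  assumes "P = (\<Union>C\<in>CS. insert (r, rt C) (Pt C))" "(a, b) \<in> P"
  shows "\<exists>C\<in>CS. (a = r \<and> b = rt C) \<or> (a, b) \<in> Pt C"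
proof -
  have "(a, b) \<in> (\<Union>C\<in>CS. insert (r, rt C) (Pt C))" using assms by simp
  then obtain C where "C \<in> CS" "(a, b) \<in> insert (r, rt C) (Pt C)" by (rule UN_E)
  then show ?thesis by auto
qed

lemma dec_C:
  assumes "dec CS r rt Pt" "C \<in> CS"
  shows "rt C \<in> C" "Pt C \<subseteq> C \<times> C" "w \<in> C \<Longrightarrow> (rt C, w) \<in> (Pt C)\<^sup>*" "r \<notin> C"
  using assms unfolding dec_def by auto

lemma dec_disj:
  assumes "dec CS r rt Pt" "C1 \<in> CS" "C2 \<in> CS" "w \<in> C1" "w \<in> C2" shows "C1 = C2"
  using assms unfolding dec_def by blast

lemma dec_noin:
  assumes "dec CS r rt Pt" "P = (\<Union>C\<in>CS. insert (r, rt C) (Pt C))"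
  shows "(a, r) \<notin> P"
proof
  assume "(a, r) \<in> P"
  from dec_edge[OF assms(2) this]
  obtain C where C: "C \<in> CS" "(a = r \<and> r = rt C) \<or> (a, r) \<in> Pt C" by blast
  have "rt C \<in> C" "Pt C \<subseteq> C \<times> C" "r \<notin> C" using dec_C[OF assms(1) C(1)] by auto
  then show False using C(2) by auto
qed

lemma dec_root:
  assumes "dec CS r rt Pt" "P = (\<Union>C\<in>CS. insert (r, rt C) (Pt C))"
  shows "(a, r) \<notin> P\<^sup>+"
proof
  assume "(a, r) \<in> P\<^sup>+"
  then obtain y where "(y, r) \<in> P" by (auto elim: tranclE)
  then show False using dec_noin[OF assms] by blast
qed

lemma trancl_dom: assumes "(a, b) \<in> R\<^sup>+" "R \<subseteq> C \<times> C" shows "a \<in> C" "b \<in> C"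
proof -
  obtain y where "(a, y) \<in> R" using tranclD[OF assms(1)] by blast
  then show "a \<in> C" using assms(2) by auto
  obtain y where "(y, b) \<in> R" using tranclD2[OF assms(1)] by blast
  then show "b \<in> C" using assms(2) by auto
qed

lemma rtrancl_dom: assumes "(a, b) \<in> R\<^sup>*" "R \<subseteq> C \<times> C" "b \<in> C" shows "a \<in> C"
proof (cases "a = b")
  case True then show ?thesis using assms(3) by simp
next
  case False then have "(a, b) \<in> R\<^sup>+" using assms(1) by (simp add: rtrancl_eq_or_trancl)
  then show ?thesis by (rule trancl_dom(1)[OF _ assms(2)])
qed

lemma dec_tr:
  assumes D: "dec CS r rt Pt" and PD: "P = (\<Union>C\<in>CS. insert (r, rt C) (Pt C))"
    and C0: "C0 \<in> CS" and w: "w \<in> C0"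
  shows "(a, w) \<in> P\<^sup>+ \<longleftrightarrow> a = r \<or> (a, w) \<in> (Pt C0)\<^sup>+"
proof
  assume "(a, w) \<in> P\<^sup>+"
  then show "a = r \<or> (a, w) \<in> (Pt C0)\<^sup>+" using w
  proof (induct arbitrary: rule: trancl_induct)
    case (base b)
    from dec_edge[OF PD this(1)]
    obtain C where C: "C \<in> CS" "(a = r \<and> b = rt C) \<or> (a, b) \<in> Pt C" by blast
    show ?case
    proof (cases "a = r")
      case False
      then have "(a, b) \<in> Pt C" using C by auto
      moreover have "Pt C \<subseteq> C \<times> C" using dec_C[OF D C(1)] by auto
      ultimately have "b \<in> C" by auto
      then have "C = C0" using dec_disj[OF D C(1) C0 _ base(2)] by auto
      then show ?thesis using `(a, b) \<in> Pt C` by auto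
    qed simp
  next
    case (step y z)
    from dec_edge[OF PD step(2)]
    obtain C where C: "C \<in> CS" "(y = r \<and> z = rt C) \<or> (y, z) \<in> Pt C" by blast
    have "y \<noteq> r" using step(1) dec_root[OF D PD] by blast
    then have yz: "(y, z) \<in> Pt C" using C by auto
    moreover have "Pt C \<subseteq> C \<times> C" using dec_C[OF D C(1)] by auto
    ultimately have "z \<in> C" "y \<in> C" by auto
    then have "C = C0" using dec_disj[OF D C(1) C0 _ step(4)] by auto
    then have "y \<in> C0" using `y \<in> C` by simp
    then have "a = r \<or> (a, y) \<in> (Pt C0)\<^sup>+" using step(3) by blast
    then show ?case using yz `C = C0` by (blast intro: trancl_into_trancl)
  qed
next
  have sub: "Pt C0 \<subseteq> P" using PD C0 by auto
  assume "a = r \<or> (a, w) \<in> (Pt C0)\<^sup>+"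
  then show "(a, w) \<in> P\<^sup>+"
  proof
    assume "a = r"
    have "(r, rt C0) \<in> P" using PD C0 by auto
    moreover have "(rt C0, w) \<in> (Pt C0)\<^sup>*" using dec_C(3)[OF D C0 w] .
    then have "(rt C0, w) \<in> P\<^sup>*" using rtrancl_mono[OF sub] by auto
    ultimately show ?thesis using `a = r` by (simp add: rtrancl_into_trancl2)
  next
    assume "(a, w) \<in> (Pt C0)\<^sup>+"
    then show ?thesis using trancl_mono[OF _ sub] by auto
  qed
qed

lemma rtr_iff: "(x, y) \<in> R\<^sup>* \<longleftrightarrow> x = y \<or> (x, y) \<in> R\<^sup>+"
  using rtrancl_eq_or_trancl[of x y R] by blast

lemma dec_rtr:
  assumes D: "dec CS r rt Pt" and PD: "P = (\<Union>C\<in>CS. insert (r, rt C) (Pt C))"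
    and C0: "C0 \<in> CS" and w: "w \<in> C0"
  shows "(a, w) \<in> P\<^sup>* \<longleftrightarrow> a = r \<or> (a, w) \<in> (Pt C0)\<^sup>*"
  unfolding rtr_iff[of a w P] rtr_iff[of a w "Pt C0"] using dec_tr[OF assms, of a] C0 w dec_C(4)[OF D C0] by blast

lemma dec_depth_r:
  assumes D: "dec CS r rt Pt" and PD: "P = (\<Union>C\<in>CS. insert (r, rt C) (Pt C))"
  shows "depth P r = 0"
  using dec_root[OF D PD] unfolding depth_def by simp

lemma dec_depth:
  assumes D: "dec CS r rt Pt" and PD: "P = (\<Union>C\<in>CS. insert (r, rt C) (Pt C))"
    and C0: "C0 \<in> CS" and w: "w \<in> C0" and fin: "finite C0"
  shows "depth P w = Suc (depth (Pt C0) w)"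
proof -
  have e: "{a. (a, w) \<in> P\<^sup>+} = insert r {a. (a, w) \<in> (Pt C0)\<^sup>+}"
    using dec_tr[OF D PD C0 w] by auto
  have X: "{a. (a, w) \<in> (Pt C0)\<^sup>+} \<subseteq> C0"
    using trancl_dom(1)[OF _ dec_C(2)[OF D C0]] by blast
  have fX: "finite {a. (a, w) \<in> (Pt C0)\<^sup>+}" using finite_subset[OF X fin] .
  have rX: "r \<notin> {a. (a, w) \<in> (Pt C0)\<^sup>+}" using X dec_C(4)[OF D C0] by blast
  show ?thesis unfolding depth_def e using card_insert_disjoint[OF fX rX] .
qed

lemma dec_anc_Suc:
  assumes D: "dec CS r rt Pt" and PD: "P = (\<Union>C\<in>CS. insert (r, rt C) (Pt C))"
    and C0: "C0 \<in> CS" and w: "w \<in> C0" and fin: "finite C0"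
  shows "anc_at P w (Suc j) = anc_at (Pt C0) w j"
proof -
  have "((a, w) \<in> P\<^sup>* \<and> depth P a = Suc j) \<longleftrightarrow> ((a, w) \<in> (Pt C0)\<^sup>* \<and> depth (Pt C0) a = j)" for a
  proof (cases "a = r")
    case True
    have "(r, w) \<notin> (Pt C0)\<^sup>*" using rtrancl_dom[OF _ dec_C(2)[OF D C0] w] dec_C(4)[OF D C0] by blast
    then show ?thesis using True dec_depth_r[OF D PD] by simp
  next
    case False
    show ?thesis
    proof (cases "(a, w) \<in> (Pt C0)\<^sup>*")
      case True
      then have "a \<in> C0" using rtrancl_dom[OF _ dec_C(2)[OF D C0] w] by blast
      then show ?thesis using True dec_depth[OF D PD C0 _ fin] dec_rtr[OF D PD C0 w] by simp
    next
      case False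
      then show ?thesis using `a \<noteq> r` dec_rtr[OF D PD C0 w] by simp
    qed
  qed
  then show ?thesis unfolding anc_at_def by simp
qed

lemma dec_anc_0:
  assumes D: "dec CS r rt Pt" and PD: "P = (\<Union>C\<in>CS. insert (r, rt C) (Pt C))"
    and w: "w = r \<or> (\<exists>C\<in>CS. w \<in> C \<and> finite C)"
  shows "anc_at P w 0 = r"
proof -
  have "((a, w) \<in> P\<^sup>* \<and> depth P a = 0) \<longleftrightarrow> a = r" for a
  proof (cases "w = r")
    case True
    then show ?thesis using dec_root[OF D PD, of a] dec_depth_r[OF D PD] rtr_iff[of a r P]
      by auto
  next
    case False
    then obtain C where C: "C \<in> CS" "w \<in> C" "finite C" using w by auto
    show ?thesis
    proof (cases "a = r")
      case True
      then show ?thesis using dec_rtr[OF D PD C(1,2)] dec_depth_r[OF D PD] by simp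
    next
      case False
      have "depth P a \<noteq> 0" if "(a, Pt C) = (a, Pt C)" "(a, w) \<in> (Pt C)\<^sup>*"
      proof -
        have "a \<in> C" using rtrancl_dom[OF that(2) dec_C(2)[OF D C(1)] C(2)] .
        then show ?thesis using dec_depth[OF D PD C(1) _ C(3)] by simp
      qed
      then show ?thesis using False dec_rtr[OF D PD C(1,2)] by auto
    qed
  qed
  then show ?thesis unfolding anc_at_def by simp
qed


lemma dec_of:
  assumes "\<forall>C\<in>components E (S - {r}). search_tree E C (rt C) (Pt C)" "symE E"
  shows "dec (components E (S - {r})) r rt Pt"
proof -
  have "r \<notin> \<Union>(components E (S - {r}))" using comps_sub[of _ E "S - {r}"] by blast
  moreover have "\<forall>C1\<in>components E (S - {r}). \<forall>C2\<in>components E (S - {r}). C1 \<noteq> C2 \<longrightarrow> C1 \<inter> C2 = {}"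
    using comps_disj[OF assms(2)] by blast
  moreover have "\<forall>C\<in>components E (S - {r}). rt C \<in> C \<and> Pt C \<subseteq> C \<times> C \<and> (\<forall>w\<in>C. (rt C, w) \<in> (Pt C)\<^sup>*)"
  proof
    fix C assume "C \<in> components E (S - {r})"
    then have "search_tree E C (rt C) (Pt C)" using assms(1) by blast
    from st_basic[OF this] show "rt C \<in> C \<and> Pt C \<subseteq> C \<times> C \<and> (\<forall>w\<in>C. (rt C, w) \<in> (Pt C)\<^sup>*)" by blast
  qed
  ultimately show ?thesis unfolding dec_def by blast
qed

lemma st_dec:
  assumes "search_tree E S r P" "symE E"
  obtains rt Pt where "r \<in> S" "connected_graph E S"
    "\<forall>C\<in>components E (S - {r}). search_tree E C (rt C) (Pt C)"
    "P = (\<Union>C\<in>components E (S - {r}). insert (r, rt C) (Pt C))"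
    "dec (components E (S - {r})) r rt Pt"
  using assms(1)
proof (cases rule: search_tree.cases)
  case (1 rt Pt)
  then show ?thesis using that dec_of[OF 1(3) assms(2)] by blast
qed

lemma comp_of:
  assumes "w \<in> S - {r}"
  obtains C where "C \<in> components E (S - {r})" "w \<in> C"
proof -
  have "w \<in> \<Union>(components E (S - {r}))" using comps_Union[of E "S - {r}"] assms by simp
  then show ?thesis using that by blast
qed

lemma st_anc0:
  assumes "search_tree E S r P" "symE E" "finite S" "w \<in> S"
  shows "anc_at P w 0 = r"
proof -
  obtain rt Pt where D: "dec (components E (S - {r})) r rt Pt"
    and PD: "P = (\<Union>C\<in>components E (S - {r}). insert (r, rt C) (Pt C))"
    using st_dec[OF assms(1,2)] by metis
  have "w = r \<or> (\<exists>C\<in>components E (S - {r}). w \<in> C \<and> finite C)"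
  proof (cases "w = r")
    case False
    then obtain C where C: "C \<in> components E (S - {r})" "w \<in> C" using comp_of assms(4) by (metis DiffI singletonD)
    have "finite C" using comps_sub[OF C(1)] assms(3) finite_subset by blast
    then show ?thesis using C by blast
  qed simp
  then show ?thesis using dec_anc_0[OF D PD] by blast
qed

lemma dec_target:
  assumes D: "dec CS r rt Pt" and PD: "P = (\<Union>C\<in>CS. insert (r, rt C) (Pt C))"
    and "(v, u) \<in> P\<^sup>+"
  obtains C where "C \<in> CS" "u \<in> C"
proof -
  obtain y where "(y, u) \<in> P" using tranclD2[OF assms(3)] by blast
  from dec_edge[OF PD this] obtain C where C: "C \<in> CS" "(y = r \<and> u = rt C) \<or> (y, u) \<in> Pt C" by blast
  have "rt C \<in> C" "Pt C \<subseteq> C \<times> C" using dec_C[OF D C(1)] by auto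
  then have "u \<in> C" using C(2) by auto
  then show ?thesis using that C(1) by blast
qed

lemma st_depth_lt:
  assumes "search_tree E S r P" "symE E"
  shows "finite S \<longrightarrow> (\<forall>v u. (v, u) \<in> P\<^sup>+ \<longrightarrow> depth P v < depth P u)"
  using assms(1)
proof (induct rule: search_tree.induct)
  case (1 r V rt Pt P)
  let ?CS = "components E (V - {r})"
  have ST: "\<forall>C\<in>?CS. search_tree E C (rt C) (Pt C)" using 1(3) by blast
  have D: "dec ?CS r rt Pt" using dec_of[OF ST assms(2)] .
  show ?case
  proof (intro impI allI)
    fix v u assume fin: "finite V" and vu: "(v, u) \<in> P\<^sup>+"
    obtain C0 where C0: "C0 \<in> ?CS" "u \<in> C0" using dec_target[OF D 1(4) vu] by blast
    have finC: "finite C0" using comps_sub[OF C0(1)] fin finite_subset by blast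
    have IH: "\<forall>v u. (v, u) \<in> (Pt C0)\<^sup>+ \<longrightarrow> depth (Pt C0) v < depth (Pt C0) u"
      using 1(3) C0(1) finC by blast
    have du: "depth P u = Suc (depth (Pt C0) u)" using dec_depth[OF D 1(4) C0 finC] .
    have "v = r \<or> (v, u) \<in> (Pt C0)\<^sup>+" using dec_tr[OF D 1(4) C0] vu by blast
    then show "depth P v < depth P u"
    proof
      assume "v = r" then show ?thesis using du dec_depth_r[OF D 1(4)] by simp
    next
      assume vu': "(v, u) \<in> (Pt C0)\<^sup>+"
      have "v \<in> C0" using trancl_dom(1)[OF vu' dec_C(2)[OF D C0(1)]] .
      then have "depth P v = Suc (depth (Pt C0) v)" using dec_depth[OF D 1(4) C0(1) _ finC] by blast
      then show ?thesis using du IH vu' by simp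
    qed
  qed
qed

lemma st_chain:
  assumes "search_tree E S r P" "symE E"
  shows "\<forall>u\<in>S. \<forall>v\<in>S. E u v \<longrightarrow> (u, v) \<in> P\<^sup>* \<or> (v, u) \<in> P\<^sup>*"
  using assms(1)
proof (induct rule: search_tree.induct)
  case (1 r V rt Pt P)
  let ?CS = "components E (V - {r})"
  have ST: "\<forall>C\<in>?CS. search_tree E C (rt C) (Pt C)" using 1(3) by blast
  have STV: "search_tree E V r P" using search_tree.intros[OF 1(1) 1(2) ST 1(4)] .
  have rr: "\<forall>w\<in>V. (r, w) \<in> P\<^sup>*" using st_basic[OF STV] by blast
  show ?case
  proof (intro ballI impI)
    fix u v assume u: "u \<in> V" and v: "v \<in> V" and e: "E u v"
    show "(u, v) \<in> P\<^sup>* \<or> (v, u) \<in> P\<^sup>*"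
    proof (cases "u = r \<or> v = r")
      case True then show ?thesis using rr u v by blast
    next
      case False
      let ?C = "{w \<in> V - {r}. reach E (V - {r}) u w}"
      have C: "?C \<in> ?CS" using comp_mem[of u "V - {r}" E] u False by blast
      have uC: "u \<in> ?C" using u False by simp
      have vC: "v \<in> ?C" using reach_edge[of u "V - {r}" v E] u v e False by simp
      have "\<forall>u\<in>?C. \<forall>v\<in>?C. E u v \<longrightarrow> (u, v) \<in> (Pt ?C)\<^sup>* \<or> (v, u) \<in> (Pt ?C)\<^sup>*"
        using 1(3) C by blast
      then have "(u, v) \<in> (Pt ?C)\<^sup>* \<or> (v, u) \<in> (Pt ?C)\<^sup>*" using uC vC e by blast
      moreover have "Pt ?C \<subseteq> P" using 1(4) C by blast
      ultimately show ?thesis using rtrancl_mono[of "Pt ?C" P] by blast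
    qed
  qed
qed

lemma st_edge:
  assumes "search_tree E S r P" "symE E"
  shows "finite S \<longrightarrow> (\<forall>w i. w \<in> S \<longrightarrow> 0 < i \<longrightarrow> i \<le> depth P w \<longrightarrow> (anc_at P w (i - 1), anc_at P w i) \<in> P)"
  using assms(1)
proof (induct rule: search_tree.induct)
  case (1 r V rt Pt P)
  let ?CS = "components E (V - {r})"
  have ST: "\<forall>C\<in>?CS. search_tree E C (rt C) (Pt C)" using 1(3) by blast
  have D: "dec ?CS r rt Pt" using dec_of[OF ST assms(2)] .
  show ?case
  proof (intro impI allI)
    fix w i assume fin: "finite V" and w: "w \<in> V" and i: "0 < i" "i \<le> depth P w"
    show "(anc_at P w (i - 1), anc_at P w i) \<in> P"
    proof (cases "w = r")
      case True then show ?thesis using i dec_depth_r[OF D 1(4)] by simp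
    next
      case False
      then obtain C0 where C0: "C0 \<in> ?CS" "w \<in> C0" using comp_of w by (metis DiffI singletonD)
      have finC: "finite C0" using comps_sub[OF C0(1)] fin finite_subset by blast
      have IH: "\<forall>w i. w \<in> C0 \<longrightarrow> 0 < i \<longrightarrow> i \<le> depth (Pt C0) w \<longrightarrow> (anc_at (Pt C0) w (i - 1), anc_at (Pt C0) w i) \<in> Pt C0"
        using 1(3) C0(1) finC by blast
      have dw: "depth P w = Suc (depth (Pt C0) w)" using dec_depth[OF D 1(4) C0 finC] .
      have sub: "Pt C0 \<subseteq> P" using 1(4) C0(1) by blast
      have aS: "anc_at P w (Suc j) = anc_at (Pt C0) w j" for j using dec_anc_Suc[OF D 1(4) C0 finC] .
      show ?thesis
      proof (cases i)
        case 0 then show ?thesis using i by simp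
      next
        case (Suc j)
        show ?thesis
        proof (cases j)
          case 0
          have "anc_at P w 0 = r" using dec_anc_0[OF D 1(4)] C0 finC by blast
          moreover have "anc_at (Pt C0) w 0 = rt C0"
            using st_anc0[OF _ assms(2) finC C0(2)] ST C0(1) by blast
          moreover have "(r, rt C0) \<in> P" using 1(4) C0(1) by blast
          ultimately show ?thesis using Suc 0 aS by simp
        next
          case (Suc k)
          have "(anc_at (Pt C0) w k, anc_at (Pt C0) w (Suc k)) \<in> Pt C0"
          proof -
            have "Suc k \<le> depth (Pt C0) w" using i `i = Suc j` Suc dw by simp
            then show ?thesis using IH[rule_format, of w "Suc k"] C0(2) by simp
          qed
          then show ?thesis using `i = Suc j` Suc aS sub by auto
        qed
      qed
    qed
  qed
qed

lemma st_max:
  assumes "search_tree E S r P" "symE E" "finite S" "K' \<subseteq> S" "K' \<noteq> {}"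
    "\<forall>u\<in>K'. \<forall>v\<in>K'. u \<noteq> v \<longrightarrow> E u v"
  shows "\<exists>v\<in>K'. \<forall>u\<in>K'. (u, v) \<in> P\<^sup>*"
proof -
  have finK: "finite K'" using assms(3,4) finite_subset by blast
  have fin': "finite (depth P ` K')" using finK by simp
  obtain v where v: "v \<in> K'" "depth P v = Max (depth P ` K')"
    using Max_in[OF fin'] assms(5) by (metis (no_types, lifting) empty_is_image imageE)
  have ch: "\<forall>u\<in>S. \<forall>v\<in>S. E u v \<longrightarrow> (u, v) \<in> P\<^sup>* \<or> (v, u) \<in> P\<^sup>*" using st_chain[OF assms(1,2)] .
  have lt: "\<forall>v u. (v, u) \<in> P\<^sup>+ \<longrightarrow> depth P v < depth P u" using st_depth_lt[OF assms(1,2)] assms(3) by blast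
  have "(u, v) \<in> P\<^sup>*" if u: "u \<in> K'" for u
  proof (cases "u = v")
    case False
    then have "E u v" using assms(6) u v(1) by blast
    then have "(u, v) \<in> P\<^sup>* \<or> (v, u) \<in> P\<^sup>*" using ch u v(1) assms(4) by blast
    moreover have "(v, u) \<notin> P\<^sup>*"
    proof
      assume "(v, u) \<in> P\<^sup>*"
      then have "(v, u) \<in> P\<^sup>+" using False rtr_iff by metis
      then have "depth P v < depth P u" using lt by blast
      moreover have "depth P u \<le> Max (depth P ` K')" using Max_ge[OF fin'] u by simp
      ultimately show False using v(2) by simp
    qed
    ultimately show ?thesis by blast
  qed simp
  then show ?thesis using v(1) by blast
qed

lemma st_vlam:
  assumes "search_tree E S r P" "symE E" "finite S" "v \<in> K" "finite K" "\<forall>u\<in>K. (u, v) \<in> P\<^sup>*"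
  shows "lam K (r, P) = depth P v" "v_lam K (r, P) = v"
proof -
  have lt: "\<forall>v u. (v, u) \<in> P\<^sup>+ \<longrightarrow> depth P v < depth P u" using st_depth_lt[OF assms(1,2)] assms(3) by blast
  have le: "depth P u \<le> depth P v" if "u \<in> K" for u
  proof (cases "u = v")
    case False
    then have "(u, v) \<in> P\<^sup>+" using assms(6) that rtr_iff by metis
    then show ?thesis using lt less_imp_le by blast
  qed simp
  have "Max (depth P ` K) = depth P v"
    by (rule Max_eqI) (use assms(4,5) le in auto)
  then show l: "lam K (r, P) = depth P v" unfolding lam_def by simp
  show "v_lam K (r, P) = v"
    unfolding v_lam_def l snd_conv
  proof (rule the_equality)
    show "v \<in> K \<and> depth P v = depth P v" using assms(4) by simp
  next
    fix u assume u: "u \<in> K \<and> depth P u = depth P v"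
    show "u = v"
    proof (rule ccontr)
      assume "u \<noteq> v"
      then have "(u, v) \<in> P\<^sup>+" using assms(6) u rtr_iff by metis
      then show False using lt u by fastforce
    qed
  qed
qed


lemma ins_0: "ins (r, P) 0 x v = (x, insert (x, r) P)"
  unfolding ins_def by simp

lemma ins_mid: "0 < i \<Longrightarrow> i \<le> depth P v \<Longrightarrow>
  ins (r, P) i x v = (r, (P - {(anc_at P v (i - 1), anc_at P v i)}) \<union> {(anc_at P v (i - 1), x), (x, anc_at P v i)})"
  unfolding ins_def by simp

lemma ins_leaf: "depth P v < i \<Longrightarrow> ins (r, P) i x v = (r, insert (v, x) P)"
  unfolding ins_def by simp

lemma ins_decomp:
  assumes D: "dec CS r rt Pt" and PD: "P = (\<Union>C\<in>CS. insert (r, rt C) (Pt C))"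
    and C0: "C0 \<in> CS" "v \<in> C0" and fin: "finite C0"
    and ST0: "search_tree E C0 (rt C0) (Pt C0)" and sy: "symE E"
    and i: "i \<le> Suc (depth (Pt C0) v)"
  shows "ins (r, P) (Suc i) x v = (r, (\<Union>C\<in>CS - {C0}. insert (r, rt C) (Pt C))
           \<union> insert (r, fst (ins (rt C0, Pt C0) i x v)) (snd (ins (rt C0, Pt C0) i x v)))"
proof -
  define Oth where "Oth = (\<Union>C\<in>CS - {C0}. insert (r, rt C) (Pt C))"
  have PO: "P = Oth \<union> insert (r, rt C0) (Pt C0)" unfolding Oth_def PD using C0(1) by blast
  have P0: "Pt C0 \<subseteq> C0 \<times> C0" "rt C0 \<in> C0" "r \<notin> C0" using dec_C[OF D C0(1)] by auto
  have notO: "e \<notin> Oth" if "e \<in> C0 \<times> C0" for e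
  proof
    assume "e \<in> Oth"
    then obtain C where C: "C \<in> CS - {C0}" "e \<in> insert (r, rt C) (Pt C)" unfolding Oth_def by blast
    have "C \<inter> C0 = {}" using D C0(1) C(1) unfolding dec_def by blast
    moreover have "Pt C \<subseteq> C \<times> C" "rt C \<in> C" using dec_C[OF D] C(1) by auto
    ultimately show False using C(2) that P0(3) by auto
  qed
  have rO: "(r, rt C0) \<notin> Oth"
  proof
    assume "(r, rt C0) \<in> Oth"
    then obtain C where C: "C \<in> CS - {C0}" "(r, rt C0) \<in> insert (r, rt C) (Pt C)" unfolding Oth_def by blast
    have "C \<inter> C0 = {}" using D C0(1) C(1) unfolding dec_def by blast
    moreover have "Pt C \<subseteq> C \<times> C" "rt C \<in> C" using dec_C[OF D] C(1) by auto
    ultimately show False using C(2) P0 by auto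
  qed
  have rP0: "(r, rt C0) \<notin> Pt C0" using P0 by auto
  have dv: "depth P v = Suc (depth (Pt C0) v)" using dec_depth[OF D PD C0 fin] .
  have aS: "anc_at P v (Suc j) = anc_at (Pt C0) v j" for j using dec_anc_Suc[OF D PD C0 fin] .
  have a0: "anc_at P v 0 = r" using dec_anc_0[OF D PD] C0 fin by blast
  have a0': "anc_at (Pt C0) v 0 = rt C0" using st_anc0[OF ST0 sy fin C0(2)] .
  show ?thesis
  proof (cases i)
    case 0
    have L: "ins (r, P) (Suc i) x v = (r, (P - {(r, rt C0)}) \<union> {(r, x), (x, rt C0)})"
      using ins_mid[of "Suc 0" P v r x] 0 dv a0 aS[of 0] a0' by simp
    have R: "ins (rt C0, Pt C0) i x v = (x, insert (x, rt C0) (Pt C0))" using 0 ins_0 by simp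
    show ?thesis unfolding L R Oth_def[symmetric] using rO rP0 PO by auto
  next
    case (Suc j)
    show ?thesis
    proof (cases "Suc j \<le> depth (Pt C0) v")
      case True
      define a where "a = anc_at (Pt C0) v j"
      define b where "b = anc_at (Pt C0) v (Suc j)"
      have L: "ins (r, P) (Suc i) x v = (r, (P - {(a, b)}) \<union> {(a, x), (x, b)})"
        using ins_mid[of "Suc (Suc j)" P v r x] Suc True dv aS[of j] aS[of "Suc j"] unfolding a_def b_def by simp
      have R: "ins (rt C0, Pt C0) i x v = (rt C0, (Pt C0 - {(a, b)}) \<union> {(a, x), (x, b)})"
        using ins_mid[of "Suc j" "Pt C0" v "rt C0" x] Suc True unfolding a_def b_def by simp
      have "(a, b) \<in> Pt C0"
        using st_edge[OF ST0 sy] fin C0(2) True unfolding a_def b_def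
        by (metis diff_Suc_1 zero_less_Suc)
      then have ab: "(a, b) \<notin> Oth" "(a, b) \<noteq> (r, rt C0)" using notO P0 rP0 by auto
      show ?thesis unfolding L R Oth_def[symmetric] using ab PO by auto
    next
      case False
      have L: "ins (r, P) (Suc i) x v = (r, insert (v, x) P)"
        using ins_leaf[of P v "Suc i" r x] Suc False dv by simp
      have R: "ins (rt C0, Pt C0) i x v = (rt C0, insert (v, x) (Pt C0))"
        using ins_leaf[of "Pt C0" v i "rt C0" x] Suc False by simp
      show ?thesis unfolding L R Oth_def[symmetric] using PO by auto
    qed
  qed
qed

definition del :: "'a \<Rightarrow> 'a rtree \<Rightarrow> 'a rtree" where
  "del x T = (if fst T = x then (THE c. (x, c) \<in> snd T) else fst T,
     {(a, b) \<in> snd T. a \<noteq> x \<and> b \<noteq> x} \<union> {(a, b). (a, x) \<in> snd T \<and> (x, b) \<in> snd T})"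

lemma del_ins:
  assumes ST: "search_tree E S r P" and sy: "symE E" and fin: "finite S" and x: "x \<notin> S"
    and v: "v \<in> S" and i: "i \<le> Suc (depth P v)"
  shows "del x (ins (r, P) i x v) = (r, P)"
proof -
  have rS: "r \<in> S" and PS: "P \<subseteq> S \<times> S" using st_basic[OF ST] by auto
  have xP: "(a, x) \<notin> P" "(x, a) \<notin> P" for a using PS x by auto
  show ?thesis
  proof (cases "i = 0")
    case True
    have th: "(THE c. (x, c) \<in> insert (x, r) P) = r"
      by (rule the_equality) (use xP in auto)
    have e1: "{(a, b) \<in> insert (x, r) P. a \<noteq> x \<and> b \<noteq> x} = P" using xP by auto
    have e2: "{(a, b). (a, x) \<in> insert (x, r) P \<and> (x, b) \<in> insert (x, r) P} = {}"
      using xP rS x by auto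
    have I: "ins (r, P) i x v = (x, insert (x, r) P)" using True ins_0 by simp
    show ?thesis unfolding I del_def fst_conv snd_conv th e1 e2 by simp
  next
    case False
    show ?thesis
    proof (cases "i \<le> depth P v")
      case True
      define a where "a = anc_at P v (i - 1)"
      define b where "b = anc_at P v i"
      have ab: "(a, b) \<in> P" using st_edge[OF ST sy] fin v True False unfolding a_def b_def by blast
      then have abS: "a \<in> S" "b \<in> S" using PS by auto
      have I: "ins (r, P) i x v = (r, (P - {(a, b)}) \<union> {(a, x), (x, b)})"
        using ins_mid[of i P v r x] True False unfolding a_def b_def by simp
      have e1: "{(c, d) \<in> (P - {(a, b)}) \<union> {(a, x), (x, b)}. c \<noteq> x \<and> d \<noteq> x} = P - {(a, b)}"
        using xP abS x by auto
      have e2: "{(c, d). (c, x) \<in> (P - {(a, b)}) \<union> {(a, x), (x, b)} \<and> (x, d) \<in> (P - {(a, b)}) \<union> {(a, x), (x, b)}} = {(a, b)}"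
        using xP abS x by auto
      have "r \<noteq> x" using rS x by auto
      then show ?thesis unfolding I del_def fst_conv snd_conv e1 e2 using ab by auto
    next
      case False
      have I: "ins (r, P) i x v = (r, insert (v, x) P)" using ins_leaf[of P v i r x] False by simp
      have e1: "{(c, d) \<in> insert (v, x) P. c \<noteq> x \<and> d \<noteq> x} = P" using xP by auto
      have e2: "{(c, d). (c, x) \<in> insert (v, x) P \<and> (x, d) \<in> insert (v, x) P} = {}"
        using xP v x by auto
      have "r \<noteq> x" using rS x by auto
      then show ?thesis unfolding I del_def fst_conv snd_conv e1 e2 by simp
    qed
  qed
qed


lemma comps_img: "components E S = (\<lambda>u. {v\<in>S. reach E S u v}) ` S"
  unfolding components_def by blast

locale gk =
  fixes V :: "'a set" and E :: "'a \<Rightarrow> 'a \<Rightarrow> bool" and K :: "'a set" and x :: 'a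
  assumes G: "graph V E" and KV: "K \<subseteq> V" and Kc: "\<forall>u\<in>K. \<forall>v\<in>K. u \<noteq> v \<longrightarrow> E u v"
    and xV: "x \<notin> V"

context gk
begin

abbreviation "Gx \<equiv> add_vertex_edges E K x"

lemma E_V: "E u v \<Longrightarrow> u \<in> V \<and> v \<in> V"
  using G unfolding graph_def by blast

lemma symE_E: "symE E"
  using G unfolding graph_def symE_def by blast

lemma symE_Ex: "symE Gx"
  using symE_E unfolding symE_def add_vertex_edges_def by blast

lemma Gx_eq: "u \<noteq> x \<Longrightarrow> v \<noteq> x \<Longrightarrow> Gx u v = E u v"
  unfolding add_vertex_edges_def by blast

lemma Gx_x1: "Gx x v \<longleftrightarrow> v \<in> K"
  using E_V[of x v] xV KV unfolding add_vertex_edges_def by blast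

lemma Gx_x2: "Gx v x \<longleftrightarrow> v \<in> K"
  using E_V[of v x] xV KV unfolding add_vertex_edges_def by blast

lemma st_E_Ex: assumes "x \<notin> S" "search_tree E S r P" shows "search_tree Gx S r P"
  by (rule st_transfer[OF assms(2)]) (use assms(1) Gx_eq in metis)

lemma st_Ex_E: assumes "x \<notin> S" "search_tree Gx S r P" shows "search_tree E S r P"
  by (rule st_transfer[OF assms(2)]) (use assms(1) Gx_eq in metis)

lemma reach_ins:
  assumes W: "W \<subseteq> V" and u: "u \<in> W" and r: "reach Gx (insert x W) u v"
  shows "(v \<in> W \<longrightarrow> reach E W u v) \<and> (v = x \<longrightarrow> (\<exists>k\<in>K \<inter> W. reach E W u k))"
proof -
  have xW: "x \<notin> W" using W xV by blast
  from r have "(u, v) \<in> {(a, b). a \<in> insert x W \<and> b \<in> insert x W \<and> Gx a b}\<^sup>*" unfolding reach_def .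
  then show ?thesis
  proof (induct rule: rtrancl_induct)
    case base then show ?case using u xW by auto
  next
    case (step y z)
    have y: "y \<in> insert x W" and z: "z \<in> insert x W" and e: "Gx y z" using step(2) by auto
    show ?case
    proof (cases "z = x")
      case True
      show ?thesis
      proof (cases "y = x")
        case True then show ?thesis using step(3) `z = x` xW by auto
      next
        case False
        then have "y \<in> W" "y \<in> K" using y e `z = x` Gx_x2 by auto
        then show ?thesis using step(3) `z = x` xW by auto
      qed
    next
      case False
      then have zW: "z \<in> W" using z by simp
      show ?thesis
      proof (cases "y = x")
        case True
        then have zK: "z \<in> K" using e Gx_x1 by simp
        obtain k where k: "k \<in> K \<inter> W" "reach E W u k" using step(3) True by blast
        have "reach E W k z"
        proof (cases "k = z")
          case False then have "E k z" using Kc k zK by blast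
          then show ?thesis using reach_edge[of k W z E] k zW by blast
        qed simp
        then show ?thesis using k(2) reach_trans False zW by metis
      next
        case False
        then have yW: "y \<in> W" using y by simp
        have "E y z" using e Gx_eq[OF False `z \<noteq> x`] by simp
        then have "reach E W y z" using reach_edge[of y W z E] yW zW by blast
        then show ?thesis using step(3) yW reach_trans `z \<noteq> x` zW by (metis xW)
      qed
    qed
  qed
qed

lemma reach_x:
  assumes W: "W \<subseteq> V" and v: "v \<in> W" and r: "reach Gx (insert x W) x v"
  shows "\<exists>k\<in>K \<inter> W. reach E W k v"
proof -
  have "reach Gx (insert x W) v x" using reach_sym[OF symE_Ex r] .
  then obtain k where "k \<in> K \<inter> W" "reach E W v k" using reach_ins[OF W v] by blast
  then show ?thesis using reach_sym[OF symE_E] by blast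
qed

lemma reach_E_Ex: assumes "reach E W u v" shows "reach Gx (insert x W) u v"
proof -
  have Wx: "W \<subseteq> insert x W" by blast
  show ?thesis by (rule reach_mono[OF assms Wx]) (auto simp: add_vertex_edges_def)
qed

lemma reach_x_k: assumes "k \<in> K \<inter> W" shows "reach Gx (insert x W) x k"
  using reach_edge[of x "insert x W" k Gx] Gx_x1 assms by blast

lemma comps_noK:
  assumes W: "W \<subseteq> V" and K0: "K \<inter> W = {}"
  shows "components Gx (insert x W) = insert {x} (components E W)"
proof -
  have xW: "x \<notin> W" using W xV by blast
  have cx: "{v\<in>insert x W. reach Gx (insert x W) x v} = {x}"
    using reach_x[OF W] K0 by auto
  have cu: "{v\<in>insert x W. reach Gx (insert x W) u v} = {v\<in>W. reach E W u v}" if u: "u \<in> W" for u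
  proof -
    have "\<not> reach Gx (insert x W) u x" using reach_ins[OF W u] K0 by blast
    moreover have "v \<in> W \<Longrightarrow> reach Gx (insert x W) u v \<longleftrightarrow> reach E W u v" for v
      using reach_ins[OF W u] reach_E_Ex by blast
    ultimately show ?thesis by auto
  qed
  show ?thesis unfolding comps_img image_insert cx using cu by (simp cong: image_cong)
qed

lemma comps_K:
  assumes W: "W \<subseteq> V" and k: "k \<in> K \<inter> W"
  shows "components Gx (insert x W) =
    insert (insert x {v\<in>W. reach E W k v}) (components E W - {{v\<in>W. reach E W k v}})"
proof -
  let ?C0 = "{v\<in>W. reach E W k v}"
  let ?cE = "\<lambda>u. {v\<in>W. reach E W u v}"
  let ?cX = "\<lambda>u. {v\<in>insert x W. reach Gx (insert x W) u v}"
  have xW: "x \<notin> W" using W xV by blast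
  have kk: "reach E W k' k" if "k' \<in> K \<inter> W" for k'
  proof (cases "k' = k")
    case False then have "E k' k" using Kc that k by blast
    then show ?thesis using reach_edge[of k' W k E] that k by blast
  qed simp
  have cx: "?cX x = insert x ?C0"
  proof -
    have "reach Gx (insert x W) x v \<longleftrightarrow> reach E W k v" if v: "v \<in> W" for v
    proof
      assume "reach Gx (insert x W) x v"
      then obtain k' where k': "k' \<in> K \<inter> W" "reach E W k' v" using reach_x[OF W v] by blast
      show "reach E W k v" using reach_trans[OF reach_sym[OF symE_E kk[OF k'(1)]] k'(2)] .
    next
      assume "reach E W k v"
      show "reach Gx (insert x W) x v" using reach_trans[OF reach_x_k[OF k] reach_E_Ex[OF `reach E W k v`]] .
    qed
    then show ?thesis using xW by auto
  qed
  have ceq: "?cE u = ?C0" if "reach E W u k" for u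
  proof -
    have ku: "reach E W k u" using reach_sym[OF symE_E that] .
    have "reach E W u v \<longleftrightarrow> reach E W k v" for v
      using reach_trans[OF ku, of v] reach_trans[OF that, of v] by blast
    then show ?thesis by simp
  qed
  have cu1: "?cX u = insert x ?C0" if u: "u \<in> W" "reach E W u k" for u
  proof -
    have "reach Gx (insert x W) u x"
      using reach_trans[OF reach_E_Ex[OF u(2)] reach_sym[OF symE_Ex reach_x_k[OF k]]] .
    moreover have "v \<in> W \<Longrightarrow> reach Gx (insert x W) u v \<longleftrightarrow> reach E W u v" for v
      using reach_ins[OF W u(1)] reach_E_Ex by blast
    ultimately have "?cX u = insert x (?cE u)" by auto
    then show ?thesis using ceq[OF u(2)] by simp
  qed
  have cu2: "?cX u = ?cE u" if u: "u \<in> W" "\<not> reach E W u k" for u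
  proof -
    have "\<not> reach Gx (insert x W) u x"
    proof
      assume "reach Gx (insert x W) u x"
      then obtain k' where k': "k' \<in> K \<inter> W" "reach E W u k'" using reach_ins[OF W u(1)] by blast
      show False using reach_trans[OF k'(2) kk[OF k'(1)]] u(2) by blast
    qed
    moreover have "v \<in> W \<Longrightarrow> reach Gx (insert x W) u v \<longleftrightarrow> reach E W u v" for v
      using reach_ins[OF W u(1)] reach_E_Ex by blast
    ultimately show ?thesis by auto
  qed
  have ne: "?cE u \<noteq> ?C0" if u: "u \<in> W" "\<not> reach E W u k" for u
  proof -
    have "k \<in> ?C0" using k by simp
    moreover have "k \<notin> ?cE u" using u(2) by simp
    ultimately show ?thesis by blast
  qed
  show ?thesis
  proof
    show "components Gx (insert x W) \<subseteq> insert (insert x ?C0) (components E W - {?C0})"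
    proof
      fix C assume "C \<in> components Gx (insert x W)"
      then obtain y where y: "y \<in> insert x W" "C = ?cX y" unfolding comps_img by blast
      show "C \<in> insert (insert x ?C0) (components E W - {?C0})"
      proof (cases "y = x")
        case True then show ?thesis using y cx by simp
      next
        case False
        then have yW: "y \<in> W" using y by simp
        show ?thesis
        proof (cases "reach E W y k")
          case True then show ?thesis using y cu1[OF yW] by simp
        next
          case False
          then have "C = ?cE y" "?cE y \<noteq> ?C0" using y cu2[OF yW] ne[OF yW] by auto
          moreover have "?cE y \<in> components E W" using comp_mem[OF yW] .
          ultimately show ?thesis by simp
        qed
      qed
    qed
  next
    show "insert (insert x ?C0) (components E W - {?C0}) \<subseteq> components Gx (insert x W)"
    proof
      fix C assume C: "C \<in> insert (insert x ?C0) (components E W - {?C0})"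
      show "C \<in> components Gx (insert x W)"
      proof (cases "C = insert x ?C0")
        case True
        then have "C = ?cX x" using cx by simp
        then show ?thesis unfolding comps_img by blast
      next
        case False
        then have "C \<in> components E W" "C \<noteq> ?C0" using C by auto
        then obtain u where u: "u \<in> W" "C = ?cE u" unfolding comps_img by blast
        have "\<not> reach E W u k" using ceq u `C \<noteq> ?C0` by blast
        then have "C = ?cX u" using cu2[OF u(1)] u(2) by simp
        then show ?thesis using u(1) unfolding comps_img by blast
      qed
    qed
  qed
qed

lemma conn_ins:
  assumes S: "S \<subseteq> V" and c: "connected_graph E S" and k: "k \<in> K \<inter> S"
  shows "connected_graph Gx (insert x S)"
proof -
  have tox: "reach Gx (insert x S) v x" if v: "v \<in> insert x S" for v
  proof (cases "v = x")
    case False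
    then have "v \<in> S" using v by simp
    then have "reach E S v k" using c k unfolding connected_graph_def by blast
    show ?thesis using reach_trans[OF reach_E_Ex[OF `reach E S v k`] reach_sym[OF symE_Ex reach_x_k[OF k]]] .
  qed simp
  show ?thesis unfolding connected_graph_def
  proof (intro conjI ballI)
    fix u v assume u: "u \<in> insert x S" and v: "v \<in> insert x S"
    show "reach Gx (insert x S) u v" using reach_trans[OF tox[OF u] reach_sym[OF symE_Ex tox[OF v]]] .
  qed simp
qed

lemma conn_rem:
  assumes S: "S \<subseteq> V" and ne: "S \<noteq> {}" and c: "connected_graph Gx (insert x S)"
  shows "connected_graph E S"
  unfolding connected_graph_def
proof (intro conjI ballI)
  fix u v assume u: "u \<in> S" and v: "v \<in> S"
  have "reach Gx (insert x S) u v" using c u v unfolding connected_graph_def by blast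
  then show "reach E S u v" using reach_ins[OF S u] v by blast
qed (rule ne)

end


context gk
begin

lemma finV: "finite V" using G unfolding graph_def by blast

lemma comps_Gx: assumes "x \<notin> S" shows "components Gx S = components E S"
proof -
  have "reach Gx S = reach E S" by (rule reach_cong) (use assms Gx_eq in metis)
  then show ?thesis unfolding components_def by simp
qed

lemma st_single: "search_tree Gx {x} x {}"
proof -
  have c: "components Gx ({x} - {x}) = {}" unfolding components_def by simp
  have "connected_graph Gx {x}" unfolding connected_graph_def by simp
  then show ?thesis using search_tree.intros[of x "{x}" Gx "\<lambda>C. x" "\<lambda>C. {}" "{}"] unfolding c by simp
qed

lemma insA:
  assumes "search_tree E S r P"
  shows "S \<subseteq> V \<longrightarrow> (\<forall>v i. v \<in> K \<inter> S \<longrightarrow> (\<forall>u\<in>K \<inter> S. (u, v) \<in> P\<^sup>*) \<longrightarrow> i \<le> Suc (depth P v) \<longrightarrow>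
     search_tree Gx (insert x S) (fst (ins (r, P) i x v)) (snd (ins (r, P) i x v)))"
  using assms
proof (induct rule: search_tree.induct)
  case (1 r S rt Pt P)
  let ?CS = "components E (S - {r})"
  have ST: "\<forall>C\<in>?CS. search_tree E C (rt C) (Pt C)" using 1(3) by blast
  have D: "dec ?CS r rt Pt" using dec_of[OF ST symE_E] .
  have STS: "search_tree E S r P" using search_tree.intros[OF 1(1) 1(2) ST 1(4)] .
  show ?case
  proof (intro impI allI)
    fix v i
    assume SV: "S \<subseteq> V" and v: "v \<in> K \<inter> S" and anc: "\<forall>u\<in>K \<inter> S. (u, v) \<in> P\<^sup>*"
      and i: "i \<le> Suc (depth P v)"
    have fin: "finite S" using SV finV finite_subset by blast
    have xS: "x \<notin> S" using SV xV by blast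
    have xr: "x \<noteq> r" using xS 1(1) by blast
    have conn: "connected_graph Gx (insert x S)" using conn_ins[OF SV 1(2) v] .
    have ST': "search_tree Gx C (rt C) (Pt C)" if "C \<in> ?CS" for C
      using st_E_Ex[of C "rt C" "Pt C"] ST that comps_sub[OF that] xS by blast
    have Sx: "insert x S - {r} = insert x (S - {r})" using xr by blast
    show "search_tree Gx (insert x S) (fst (ins (r, P) i x v)) (snd (ins (r, P) i x v))"
    proof (cases i)
      case 0
      have I: "ins (r, P) i x v = (x, insert (x, r) P)" using 0 ins_0 by simp
      have c: "components Gx (insert x S - {x}) = {S}"
        using comps_Gx[OF xS] comps_conn[OF 1(2)] xS by simp
      have "search_tree Gx S r P" using st_E_Ex[OF xS STS] .
      then have "search_tree Gx (insert x S) x (\<Union>C\<in>{S}. insert (x, (\<lambda>C. r) C) ((\<lambda>C. P) C))"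
        using search_tree.intros[of x "insert x S" Gx "\<lambda>C. r" "\<lambda>C. P"] conn unfolding c by simp
      then show ?thesis unfolding I by simp
    next
      case (Suc j)
      show ?thesis
      proof (cases "v = r")
        case True
        have dr: "depth P r = 0" using dec_depth_r[OF D 1(4)] .
        have I: "ins (r, P) i x v = (r, insert (r, x) P)" using ins_leaf[of P v i r x] Suc True dr by simp
        have KW: "K \<inter> (S - {r}) = {}"
        proof -
          have "u = r" if "u \<in> K \<inter> S" for u
          proof -
            have "(u, r) \<in> P\<^sup>*" using anc that True by blast
            then show ?thesis using dec_root[OF D 1(4), of u] rtr_iff by metis
          qed
          then show ?thesis by blast
        qed
        have SV': "S - {r} \<subseteq> V" using SV by blast
        have c: "components Gx (insert x S - {r}) = insert {x} ?CS"
          unfolding Sx using comps_noK[OF SV' KW] .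
        define rt' where "rt' = (\<lambda>C. if C = {x} then x else rt C)"
        define Pt' where "Pt' = (\<lambda>C. if C = {x} then {} else Pt C)"
        have nx: "C \<noteq> {x}" if "C \<in> ?CS" for C using comps_sub[OF that] xS by blast
        have ch: "\<forall>C\<in>components Gx (insert x S - {r}). search_tree Gx C (rt' C) (Pt' C)"
          unfolding c rt'_def Pt'_def using st_single ST' nx by auto
        have "(\<Union>C\<in>components Gx (insert x S - {r}). insert (r, rt' C) (Pt' C)) = insert (r, x) P"
          unfolding c 1(4) rt'_def Pt'_def using nx by auto
        then have "search_tree Gx (insert x S) r (insert (r, x) P)"
          using search_tree.intros[of r "insert x S" Gx rt' Pt'] conn ch 1(1) by simp
        then show ?thesis unfolding I by simp
      next
        case False
        let ?C0 = "{w \<in> S - {r}. reach E (S - {r}) v w}"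
        have vS': "v \<in> S - {r}" using v False by blast
        have C0: "?C0 \<in> ?CS" using comp_mem[OF vS'] .
        have vC0: "v \<in> ?C0" using vS' by simp
        have finC: "finite ?C0" using fin by simp
        have C0V: "?C0 \<subseteq> V" using SV by blast
        have dv: "depth P v = Suc (depth (Pt ?C0) v)" using dec_depth[OF D 1(4) C0 vC0 finC] .
        have IH: "\<forall>v i. v \<in> K \<inter> ?C0 \<longrightarrow> (\<forall>u\<in>K \<inter> ?C0. (u, v) \<in> (Pt ?C0)\<^sup>*) \<longrightarrow> i \<le> Suc (depth (Pt ?C0) v) \<longrightarrow>
          search_tree Gx (insert x ?C0) (fst (ins (rt ?C0, Pt ?C0) i x v)) (snd (ins (rt ?C0, Pt ?C0) i x v))"
          using 1(3) C0 C0V by blast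
        have anc0: "\<forall>u\<in>K \<inter> ?C0. (u, v) \<in> (Pt ?C0)\<^sup>*"
        proof
          fix u assume u: "u \<in> K \<inter> ?C0"
          then have "(u, v) \<in> P\<^sup>*" using anc by blast
          moreover have "u \<noteq> r" using u by blast
          ultimately show "(u, v) \<in> (Pt ?C0)\<^sup>*" using dec_rtr[OF D 1(4) C0 vC0] by blast
        qed
        have j: "j \<le> Suc (depth (Pt ?C0) v)" using i Suc dv by simp
        define T0 where "T0 = ins (rt ?C0, Pt ?C0) j x v"
        have ST0: "search_tree Gx (insert x ?C0) (fst T0) (snd T0)"
        proof -
          have vK0: "v \<in> K \<inter> ?C0" using v vC0 by blast
          show ?thesis using spec[OF spec[OF IH, of v], of j] vK0 anc0 j unfolding T0_def by blast
        qed
        have I: "ins (r, P) i x v = (r, (\<Union>C\<in>?CS - {?C0}. insert (r, rt C) (Pt C)) \<union> insert (r, fst T0) (snd T0))"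
          unfolding Suc T0_def using ins_decomp[OF D 1(4) C0 vC0 finC _ symE_E j] ST C0 by blast
        have SV': "S - {r} \<subseteq> V" using SV by blast
        have vK: "v \<in> K \<inter> (S - {r})" using v vS' by blast
        have c: "components Gx (insert x S - {r}) = insert (insert x ?C0) (?CS - {?C0})"
          unfolding Sx using comps_K[OF SV' vK] .
        define rt' where "rt' = (\<lambda>C. if C = insert x ?C0 then fst T0 else rt C)"
        define Pt' where "Pt' = (\<lambda>C. if C = insert x ?C0 then snd T0 else Pt C)"
        have nx: "C \<noteq> insert x ?C0" if "C \<in> ?CS" for C using comps_sub[OF that] xS by blast
        have ch: "\<forall>C\<in>components Gx (insert x S - {r}). search_tree Gx C (rt' C) (Pt' C)"
          unfolding c rt'_def Pt'_def using ST0 ST' nx by auto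
        have "(\<Union>C\<in>components Gx (insert x S - {r}). insert (r, rt' C) (Pt' C)) =
              (\<Union>C\<in>?CS - {?C0}. insert (r, rt C) (Pt C)) \<union> insert (r, fst T0) (snd T0)"
          unfolding c rt'_def Pt'_def using nx by auto
        then have "search_tree Gx (insert x S) r ((\<Union>C\<in>?CS - {?C0}. insert (r, rt C) (Pt C)) \<union> insert (r, fst T0) (snd T0))"
          using search_tree.intros[of r "insert x S" Gx rt' Pt'] conn ch 1(1) by simp
        then show ?thesis unfolding I by simp
      qed
    qed
  qed
qed

end


context gk
begin

lemma insB:
  assumes "search_tree Gx S' r P'"
  shows "x \<in> S' \<longrightarrow> S' \<subseteq> insert x V \<longrightarrow> S' \<noteq> {x} \<longrightarrow>
    (\<exists>r0 P0 i v. search_tree E (S' - {x}) r0 P0 \<and> v \<in> K \<inter> (S' - {x}) \<and>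
       (\<forall>u\<in>K \<inter> (S' - {x}). (u, v) \<in> P0\<^sup>*) \<and> i \<le> Suc (depth P0 v) \<and> (r, P') = ins (r0, P0) i x v)"
  using assms
proof (induct rule: search_tree.induct)
  case (1 r S' rt Pt P')
  let ?CS' = "components Gx (S' - {r})"
  show ?case
  proof (intro impI)
    assume xS': "x \<in> S'" and S'V: "S' \<subseteq> insert x V" and nx: "S' \<noteq> {x}"
    define S where "S = S' - {x}"
    have SV: "S \<subseteq> V" using S'V unfolding S_def by blast
    have xS: "x \<notin> S" unfolding S_def by blast
    have S'S: "S' = insert x S" using xS' unfolding S_def by blast
    have Sne: "S \<noteq> {}" using nx xS' unfolding S_def by blast
    have fin: "finite S" using SV finV finite_subset by blast
    have connS: "connected_graph E S" using conn_rem[OF SV Sne] 1(2) S'S by simp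
    have ST': "\<forall>C\<in>?CS'. search_tree Gx C (rt C) (Pt C)" using 1(3) by blast
    have Kx: "\<exists>y. y \<in> K \<inter> S" if s: "s \<in> S" for s
    proof -
      have "reach Gx S' x s" using 1(2) xS' s S'S unfolding connected_graph_def by blast
      moreover have "x \<noteq> s" using s xS by blast
      ultimately obtain y where y: "y \<in> S'" "Gx x y" using reach_first by metis
      have "y \<in> K" using y(2) Gx_x1 by simp
      moreover have "y \<noteq> x" using `y \<in> K` KV xV by blast
      ultimately have "y \<in> K \<inter> S" using y(1) S'S by blast
      then show ?thesis by blast
    qed
    have "\<exists>r0 P0 i v. search_tree E S r0 P0 \<and> v \<in> K \<inter> S \<and>
       (\<forall>u\<in>K \<inter> S. (u, v) \<in> P0\<^sup>*) \<and> i \<le> Suc (depth P0 v) \<and> (r, P') = ins (r0, P0) i x v"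
    proof (cases "r = x")
      case True
      have c: "?CS' = {S}" using True S_def comps_Gx[OF xS] comps_conn[OF connS] by simp
      have STc: "search_tree E S (rt S) (Pt S)" using ST' c st_Ex_E[OF xS] by blast
      have P': "P' = insert (x, rt S) (Pt S)" using 1(4) c True by simp
      obtain s where "s \<in> S" using Sne by blast
      then obtain k where k: "k \<in> K \<inter> S" using Kx by blast
      have cl: "\<forall>u\<in>K \<inter> S. \<forall>v\<in>K \<inter> S. u \<noteq> v \<longrightarrow> E u v" using Kc by blast
      obtain v where v: "v \<in> K \<inter> S" "\<forall>u\<in>K \<inter> S. (u, v) \<in> (Pt S)\<^sup>*"
        using st_max[OF STc symE_E fin _ _ cl] k by blast
      have "(r, P') = ins (rt S, Pt S) 0 x v" using P' True by (simp add: ins_def)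
      then show ?thesis using STc v by blast
    next
      case False
      define W where "W = S - {r}"
      have rS: "r \<in> S" using 1(1) False S'S by blast
      have WV: "W \<subseteq> V" using SV unfolding W_def by blast
      have SW: "S' - {r} = insert x W" unfolding W_def using S'S False by blast
      have xW: "x \<notin> W" using xS unfolding W_def by blast
      have finW: "finite W" using fin unfolding W_def by simp
      show ?thesis
      proof (cases "K \<inter> W = {}")
        case True
        have c: "?CS' = insert {x} (components E W)" unfolding SW using comps_noK[OF WV True] .
        have sx: "search_tree Gx {x} (rt {x}) (Pt {x})" using ST' c by blast
        have rtx: "rt {x} = x" using st_basic[OF sx] by blast
        have ptx: "Pt {x} = {}"
        proof -
          have "Pt {x} \<subseteq> {x} \<times> {x}" "\<forall>a. (a, rt {x}) \<notin> Pt {x}" using st_basic[OF sx] by blast+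
          then show ?thesis using rtx by auto
        qed
        have rK: "r \<in> K"
        proof -
          have "reach Gx S' x r" using 1(2) xS' 1(1) unfolding connected_graph_def by blast
          then obtain y where y: "y \<in> S'" "Gx x y" using reach_first False by metis
          have "y \<in> K" using y(2) Gx_x1 by simp
          moreover have "y \<noteq> x" using `y \<in> K` KV xV by blast
          ultimately show ?thesis using y(1) S'S True unfolding W_def by blast
        qed
        have KS: "K \<inter> S = {r}" using True rK rS unfolding W_def by blast
        define P0 where "P0 = (\<Union>C\<in>components E W. insert (r, rt C) (Pt C))"
        have nxC: "C \<noteq> {x}" if "C \<in> components E W" for C using comps_sub[OF that] xW by blast
        have chE: "\<forall>C\<in>components E W. search_tree E C (rt C) (Pt C)"
        proof
          fix C assume C: "C \<in> components E W"
          then have "search_tree Gx C (rt C) (Pt C)" using ST' c by blast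
          moreover have "x \<notin> C" using comps_sub[OF C] xW by blast
          ultimately show "search_tree E C (rt C) (Pt C)" using st_Ex_E by blast
        qed
        have ST0: "search_tree E S r P0"
          using search_tree.intros[of r S E rt Pt P0] rS connS chE unfolding P0_def W_def by simp
        have D0: "dec (components E W) r rt Pt" using dec_of[OF chE[unfolded W_def] symE_E] unfolding W_def .
        have d0: "depth P0 r = 0" using dec_depth_r[OF D0 P0_def] .
        have P': "P' = insert (r, x) P0" using 1(4) unfolding c P0_def using rtx ptx by auto
        have "(r, P') = ins (r, P0) (Suc 0) x r" using ins_leaf[of P0 r "Suc 0" r x] d0 P' by simp
        then show ?thesis
          by (intro exI[of _ r] exI[of _ P0] exI[of _ "Suc 0"]) (use ST0 KS in simp)
      next
        case False
        then obtain k where k: "k \<in> K \<inter> W" by blast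
        let ?C0 = "{v \<in> W. reach E W k v}"
        have c: "?CS' = insert (insert x ?C0) (components E W - {?C0})"
          unfolding SW using comps_K[OF WV k] .
        have C0W: "?C0 \<in> components E W" using comp_mem[of k W E] k by blast
        have C0': "insert x ?C0 \<in> ?CS'" using c by blast
        have kC0: "k \<in> ?C0" using k by simp
        have IH: "\<exists>r0 P0 i v. search_tree E (insert x ?C0 - {x}) r0 P0 \<and> v \<in> K \<inter> (insert x ?C0 - {x}) \<and>
             (\<forall>u\<in>K \<inter> (insert x ?C0 - {x}). (u, v) \<in> P0\<^sup>*) \<and> i \<le> Suc (depth P0 v) \<and>
             (rt (insert x ?C0), Pt (insert x ?C0)) = ins (r0, P0) i x v"
        proof -
          have a1: "x \<in> insert x ?C0" by simp
          have a2: "insert x ?C0 \<subseteq> insert x V" using WV by blast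
          have a3: "insert x ?C0 \<noteq> {x}" using kC0 xW by blast
          have a4: "x \<in> insert x ?C0 \<longrightarrow> insert x ?C0 \<subseteq> insert x V \<longrightarrow> insert x ?C0 \<noteq> {x} \<longrightarrow>
            (\<exists>r0 P0 i v. search_tree E (insert x ?C0 - {x}) r0 P0 \<and> v \<in> K \<inter> (insert x ?C0 - {x}) \<and>
             (\<forall>u\<in>K \<inter> (insert x ?C0 - {x}). (u, v) \<in> P0\<^sup>*) \<and> i \<le> Suc (depth P0 v) \<and>
             (rt (insert x ?C0), Pt (insert x ?C0)) = ins (r0, P0) i x v)"
            using bspec[OF 1(3) C0'] by (rule conjunct2)
          show ?thesis using mp[OF mp[OF mp[OF a4 a1] a2] a3] .
        qed
        have e0: "insert x ?C0 - {x} = ?C0" using xW by blast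
        obtain r1 P1 i1 v1 where ST1: "search_tree E ?C0 r1 P1" and v1: "v1 \<in> K \<inter> ?C0"
          and anc1: "\<forall>u\<in>K \<inter> ?C0. (u, v1) \<in> P1\<^sup>*" and i1: "i1 \<le> Suc (depth P1 v1)"
          and eq1: "(rt (insert x ?C0), Pt (insert x ?C0)) = ins (r1, P1) i1 x v1"
          using IH unfolding e0 by blast
        define rt0 where "rt0 = (\<lambda>C. if C = ?C0 then r1 else rt C)"
        define Pt0 where "Pt0 = (\<lambda>C. if C = ?C0 then P1 else Pt C)"
        define P0 where "P0 = (\<Union>C\<in>components E W. insert (r, rt0 C) (Pt0 C))"
        have chE: "\<forall>C\<in>components E W. search_tree E C (rt0 C) (Pt0 C)"
        proof
          fix C assume C: "C \<in> components E W"
          show "search_tree E C (rt0 C) (Pt0 C)"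
          proof (cases "C = ?C0")
            case True then show ?thesis using ST1 unfolding rt0_def Pt0_def by simp
          next
            case False
            then have "C \<in> ?CS'" using c C by blast
            then have "search_tree Gx C (rt C) (Pt C)" using ST' by blast
            moreover have "x \<notin> C" using comps_sub[OF C] xW by blast
            ultimately show ?thesis using st_Ex_E False unfolding rt0_def Pt0_def by simp
          qed
        qed
        have ST0: "search_tree E S r P0"
          using search_tree.intros[of r S E rt0 Pt0 P0] rS connS chE unfolding P0_def W_def by simp
        have D0: "dec (components E W) r rt0 Pt0" using dec_of[OF chE[unfolded W_def] symE_E] unfolding W_def .
        have finC0: "finite ?C0" using finW by simp
        have v1C0: "v1 \<in> ?C0" using v1 by blast
        have ST1': "search_tree E ?C0 (rt0 ?C0) (Pt0 ?C0)" using ST1 unfolding rt0_def Pt0_def by simp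
        have dv: "depth P0 v1 = Suc (depth P1 v1)"
          using dec_depth[OF D0 P0_def C0W v1C0 finC0] unfolding Pt0_def by simp
        have i1': "i1 \<le> Suc (depth (Pt0 ?C0) v1)" using i1 unfolding Pt0_def by simp
        have I: "ins (r, P0) (Suc i1) x v1 = (r, (\<Union>C\<in>components E W - {?C0}. insert (r, rt0 C) (Pt0 C))
           \<union> insert (r, fst (ins (rt0 ?C0, Pt0 ?C0) i1 x v1)) (snd (ins (rt0 ?C0, Pt0 ?C0) i1 x v1)))"
          using ins_decomp[OF D0 P0_def C0W v1C0 finC0 ST1' symE_E i1'] .
        have oth: "(\<Union>C\<in>components E W - {?C0}. insert (r, rt0 C) (Pt0 C)) = (\<Union>C\<in>components E W - {?C0}. insert (r, rt C) (Pt C))"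
          unfolding rt0_def Pt0_def by (rule SUP_cong) auto
        have P': "P' = insert (r, rt (insert x ?C0)) (Pt (insert x ?C0)) \<union> (\<Union>C\<in>components E W - {?C0}. insert (r, rt C) (Pt C))"
          using 1(4) unfolding c by simp
        have "ins (rt0 ?C0, Pt0 ?C0) i1 x v1 = (rt (insert x ?C0), Pt (insert x ?C0))"
          using eq1 unfolding rt0_def Pt0_def by simp
        then have eqI: "(r, P') = ins (r0', P0) (Suc i1) x v1" if "r0' = r" for r0'
          unfolding that I oth P' by auto
        have ancall: "\<forall>u\<in>K \<inter> S. (u, v1) \<in> P0\<^sup>*"
        proof
          fix u assume u: "u \<in> K \<inter> S"
          show "(u, v1) \<in> P0\<^sup>*"
          proof (cases "u = r")
            case True
            have "v1 \<in> S" using v1 unfolding W_def by blast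
            then show ?thesis using st_basic[OF ST0] True by blast
          next
            case False
            then have uW: "u \<in> K \<inter> W" using u unfolding W_def by blast
            have "reach E W k u"
            proof (cases "k = u")
              case False then have "E k u" using Kc k uW by blast
              then show ?thesis using reach_edge[of k W u E] k uW by blast
            qed simp
            then have "u \<in> K \<inter> ?C0" using uW by blast
            then have "(u, v1) \<in> P1\<^sup>*" using anc1 by blast
            moreover have "P1 \<subseteq> P0" unfolding P0_def Pt0_def using C0W by auto
            ultimately show ?thesis using rtrancl_mono[of P1 P0] by blast
          qed
        qed
        have v1S: "v1 \<in> K \<inter> S" using v1 unfolding W_def by blast
        have "Suc i1 \<le> Suc (depth P0 v1)" using i1 dv by simp
        then show ?thesis
          by (intro exI[of _ r] exI[of _ P0] exI[of _ "Suc i1"] exI[of _ v1]) (use ST0 v1S ancall eqI[of r] in simp)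
      qed
    qed
    then show "\<exists>r0 P0 i v. search_tree E (S' - {x}) r0 P0 \<and> v \<in> K \<inter> (S' - {x}) \<and>
       (\<forall>u\<in>K \<inter> (S' - {x}). (u, v) \<in> P0\<^sup>*) \<and> i \<le> Suc (depth P0 v) \<and> (r, P') = ins (r0, P0) i x v"
      unfolding S_def .
  qed
qed

end


context gk
begin

lemma Px_char:
  assumes ST: "search_tree E V r P" and Kne: "K \<noteq> {}"
  obtains v where "v \<in> K" "\<forall>u\<in>K. (u, v) \<in> P\<^sup>*"
    "Px K x (r, P) = {ins (r, P) i x v | i. i \<le> Suc (depth P v)}"
proof -
  have cl: "\<forall>u\<in>K. \<forall>v\<in>K. u \<noteq> v \<longrightarrow> E u v" using Kc .
  obtain v where v: "v \<in> K" "\<forall>u\<in>K. (u, v) \<in> P\<^sup>*"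
    using st_max[OF ST symE_E finV KV Kne cl] by blast
  have finK: "finite K" using finV KV finite_subset by blast
  have l: "lam K (r, P) = depth P v" "v_lam K (r, P) = v"
    using st_vlam[OF ST symE_E finV v(1) finK v(2)] by auto
  have "Px K x (r, P) = {ins (r, P) i x v | i. i \<le> Suc (depth P v)}"
    unfolding Px_def l by simp
  then show ?thesis using that v by blast
qed

lemma in_Px:
  assumes ST: "search_tree E V r P" and Kne: "K \<noteq> {}" and v: "v \<in> K" "\<forall>u\<in>K. (u, v) \<in> P\<^sup>*"
  shows "y \<in> Px K x (r, P) \<longleftrightarrow> (\<exists>i. i \<le> Suc (depth P v) \<and> y = ins (r, P) i x v)"
proof -
  have finK: "finite K" using finV KV finite_subset by blast
  have l: "lam K (r, P) = depth P v" "v_lam K (r, P) = v"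
    using st_vlam[OF ST symE_E finV v(1) finK v(2)] by auto
  show ?thesis unfolding Px_def l by auto
qed

lemma main:
  assumes conn: "connected_graph E V" and Kne: "K \<noteq> {}"
  shows "partition_on (search_trees (insert x V) Gx) (Px K x ` search_trees V E)"
proof -
  have Vne: "V \<noteq> {}" using conn unfolding connected_graph_def by blast
  have KVV: "K \<inter> V = K" using KV by blast
  have ex: "\<exists>v. v \<in> K \<and> (\<forall>u\<in>K. (u, v) \<in> P\<^sup>*)" if "search_tree E V r P" for r P
    using Px_char[OF that Kne] by metis
  have U: "\<Union>(Px K x ` search_trees V E) = search_trees (insert x V) Gx"
  proof
    show "\<Union>(Px K x ` search_trees V E) \<subseteq> search_trees (insert x V) Gx"
    proof
      fix y assume "y \<in> \<Union>(Px K x ` search_trees V E)"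
      then obtain r P where ST: "search_tree E V r P" and y: "y \<in> Px K x (r, P)"
        unfolding search_trees_def by blast
      obtain v where v: "v \<in> K" "\<forall>u\<in>K. (u, v) \<in> P\<^sup>*" using ex[OF ST] by blast
      obtain i where i: "i \<le> Suc (depth P v)" "y = ins (r, P) i x v" using in_Px[OF ST Kne v] y by blast
      have "search_tree Gx (insert x V) (fst y) (snd y)"
        using insA[OF ST] i v KVV by simp
      then show "y \<in> search_trees (insert x V) Gx" unfolding search_trees_def
        by (metis (mono_tags, lifting) case_prod_conv mem_Collect_eq prod.collapse)
    qed
  next
    show "search_trees (insert x V) Gx \<subseteq> \<Union>(Px K x ` search_trees V E)"
    proof
      fix y assume "y \<in> search_trees (insert x V) Gx"
      then obtain r' P' where y: "y = (r', P')" and ST': "search_tree Gx (insert x V) r' P'"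
        unfolding search_trees_def by blast
      have a: "x \<in> insert x V" "insert x V \<subseteq> insert x V" "insert x V \<noteq> {x}" using Vne xV by auto
      have e: "insert x V - {x} = V" using xV by blast
      obtain r0 P0 i v where ST0: "search_tree E V r0 P0" and v: "v \<in> K" and anc: "\<forall>u\<in>K. (u, v) \<in> P0\<^sup>*"
        and i: "i \<le> Suc (depth P0 v)" and eq: "(r', P') = ins (r0, P0) i x v"
        using insB[OF ST'] a unfolding e KVV by blast
      have "y \<in> Px K x (r0, P0)" using in_Px[OF ST0 Kne v anc] i eq y by blast
      moreover have "(r0, P0) \<in> search_trees V E" using ST0 unfolding search_trees_def by simp
      ultimately show "y \<in> \<Union>(Px K x ` search_trees V E)" by blast
    qed
  qed
  have uniq: "T1 = T2" if T1: "T1 \<in> search_trees V E" and T2: "T2 \<in> search_trees V E"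
    and y: "y \<in> Px K x T1" "y \<in> Px K x T2" for T1 T2 y
  proof -
    have d: "del x y = T" if T: "T \<in> search_trees V E" and y: "y \<in> Px K x T" for T
    proof -
      obtain r P where TT: "T = (r, P)" and ST: "search_tree E V r P" using T unfolding search_trees_def by blast
      obtain v where v: "v \<in> K" "\<forall>u\<in>K. (u, v) \<in> P\<^sup>*" using ex[OF ST] by blast
      obtain i where i: "i \<le> Suc (depth P v)" "y = ins (r, P) i x v" using in_Px[OF ST Kne v] y TT by blast
      have "v \<in> V" using v KV by blast
      then show ?thesis using del_ins[OF ST symE_E finV xV _ i(1)] i(2) TT by simp
    qed
    show ?thesis using d[OF T1 y(1)] d[OF T2 y(2)] by simp
  qed
  have Dj: "disjoint (Px K x ` search_trees V E)"
    unfolding disjoint_def using uniq by blast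
  have Ne: "{} \<notin> Px K x ` search_trees V E"
  proof
    assume "{} \<in> Px K x ` search_trees V E"
    then obtain T where T: "T \<in> search_trees V E" "Px K x T = {}" by auto
    have "ins T 0 x (v_lam K T) \<in> Px K x T" unfolding Px_def by blast
    then show False using T(2) by simp
  qed
  show ?thesis unfolding partition_on_def using U Dj Ne by blast
qed

end

theorem proposition2p4:
  fixes V :: "'a set" and E :: "'a \<Rightarrow> 'a \<Rightarrow> bool" and K :: "'a set" and x :: 'a
  assumes "graph V E"
    and "connected_graph E V"
    and "K \<subseteq> V" and "K \<noteq> {}"
    and "\<forall>u\<in>K. \<forall>v\<in>K. u \<noteq> v \<longrightarrow> E u v"
    and "x \<notin> V"
  shows "partition_on (search_trees (insert x V) (add_vertex_edges E K x))
           (Px K x ` search_trees V E)"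
proof -
  interpret g: gk V E K x by (unfold_locales) (use assms in auto)
  show ?thesis using g.main[OF assms(2,4)] .
qed


end
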